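(* Let $P$ be a projection algebra, let $p,q\in P$, and put $p'=q\delta_p$ and $q'=p\theta_q$. Then: (i) $p'\le p$, $q'\le q$ and $p'\,\mathscr F\,q'$; (ii) $\theta_p\theta_q=\theta_{p'}\theta_{q'}$ and $\delta_q\delta_p=\delta_{q'}\delta_{p'}$; (iii) if $p\le r\,\mathscr F\,q$ for some $r\in P$, then $p'=p$; (iv) if $p\,\mathscr F\,s\ge q$ for some $s\in P$, then $q'=q$.
   Context: Maps are written to the right of their arguments and composed left to right ($p\,\alpha\beta=(p\alpha)\beta$). A projection algebra is a set $P$ with maps $\theta_p,\delta_p:P\to P$ ($p\in P$) such that for all $p,q\in P$: $p\theta_p=p$, $p\delta_p=p$; $p\theta_{q\theta_p}=q\theta_p$, $p\delta_{q\delta_p}=q\delta_p$; $\theta_q\theta_{q\theta_p}=\theta_q\theta_p$, $\delta_q\delta_{q\delta_p}=\delta_q\delta_p$; $\theta_p\delta_p=\theta_p$, $\delta_p\theta_p=\delta_p$; $\theta_{p\delta_q}\theta_p=\theta_q\theta_p$, $\delta_{p\theta_q}\delta_p=\delta_q\delta_p$. The partial order is $p\le q\iff p=p\theta_q$ (equivalently $p=p\delta_q$), and $p\,\mathscr F\,q$ means $p=q\delta_p$ and $q=p\theta_q$. *)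

theory Defs
  imports Main
begin

(* Convention: th p x  denotes  x theta_p  (the map theta_p applied to x),
   dl p x  denotes  x delta_p.  Maps act on the right and compose left to right,
   so the composite map  theta_p theta_q  is  (%x. th q (th p x)). *)

definition projection_algebra :: "'a set \<Rightarrow> ('a \<Rightarrow> 'a \<Rightarrow> 'a) \<Rightarrow> ('a \<Rightarrow> 'a \<Rightarrow> 'a) \<Rightarrow> bool" where
  "projection_algebra P th dl \<longleftrightarrow>
     (\<forall>p\<in>P. \<forall>x\<in>P. th p x \<in> P \<and> dl p x \<in> P) \<and>
     (\<forall>p\<in>P. \<forall>q\<in>P.
        th p p = p \<and> dl p p = p \<and>
        th (th p q) p = th p q \<and> dl (dl p q) p = dl p q \<and>
        (\<forall>x\<in>P. th (th p q) (th q x) = th p (th q x)) \<and>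
        (\<forall>x\<in>P. dl (dl p q) (dl q x) = dl p (dl q x)) \<and>
        (\<forall>x\<in>P. dl p (th p x) = th p x) \<and>
        (\<forall>x\<in>P. th p (dl p x) = dl p x) \<and>
        (\<forall>x\<in>P. th p (th (dl q p) x) = th p (th q x)) \<and>
        (\<forall>x\<in>P. dl p (dl (th q p) x) = dl p (dl q x)))"

definition pa_le :: "('a \<Rightarrow> 'a \<Rightarrow> 'a) \<Rightarrow> 'a \<Rightarrow> 'a \<Rightarrow> bool" where
  "pa_le th p q \<longleftrightarrow> p = th q p"

definition pa_F :: "('a \<Rightarrow> 'a \<Rightarrow> 'a) \<Rightarrow> ('a \<Rightarrow> 'a \<Rightarrow> 'a) \<Rightarrow> 'a \<Rightarrow> 'a \<Rightarrow> bool" where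
  "pa_F th dl p q \<longleftrightarrow> p = dl p q \<and> q = th q p"

end

theory Submission
  imports Defs
begin

lemma ax:
  assumes PA: "projection_algebra P th dl"
  shows "\<And>p x. p\<in>P \<Longrightarrow> x\<in>P \<Longrightarrow> th p x \<in> P"
    "\<And>p x. p\<in>P \<Longrightarrow> x\<in>P \<Longrightarrow> dl p x \<in> P"
    "\<And>p. p\<in>P \<Longrightarrow> th p p = p" "\<And>p. p\<in>P \<Longrightarrow> dl p p = p"
    "\<And>p q. p\<in>P \<Longrightarrow> q\<in>P \<Longrightarrow> th (th p q) p = th p q"
    "\<And>p q. p\<in>P \<Longrightarrow> q\<in>P \<Longrightarrow> dl (dl p q) p = dl p q"
    "\<And>p q x. p\<in>P \<Longrightarrow> q\<in>P \<Longrightarrow> x\<in>P \<Longrightarrow> th (th p q) (th q x) = th p (th q x)"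
    "\<And>p q x. p\<in>P \<Longrightarrow> q\<in>P \<Longrightarrow> x\<in>P \<Longrightarrow> dl (dl p q) (dl q x) = dl p (dl q x)"
    "\<And>p x. p\<in>P \<Longrightarrow> x\<in>P \<Longrightarrow> dl p (th p x) = th p x"
    "\<And>p x. p\<in>P \<Longrightarrow> x\<in>P \<Longrightarrow> th p (dl p x) = dl p x"
    "\<And>p q x. p\<in>P \<Longrightarrow> q\<in>P \<Longrightarrow> x\<in>P \<Longrightarrow> th p (th (dl q p) x) = th p (th q x)"
    "\<And>p q x. p\<in>P \<Longrightarrow> q\<in>P \<Longrightarrow> x\<in>P \<Longrightarrow> dl p (dl (th q p) x) = dl p (dl q x)"
  using PA unfolding projection_algebra_def by auto

context fixes P :: "'a set" and th dl :: "'a \<Rightarrow> 'a \<Rightarrow> 'a" assumes PA: "projection_algebra P th dl" begin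
lemmas A = ax[OF PA]
lemma thth: "p\<in>P \<Longrightarrow> x\<in>P \<Longrightarrow> th p (th p x) = th p x"
  by (metis A(1,9,10))
lemma dldl: "p\<in>P \<Longrightarrow> x\<in>P \<Longrightarrow> dl p (dl p x) = dl p x"
  by (metis A(2,9,10))
lemma g1: "p\<in>P \<Longrightarrow> q\<in>P \<Longrightarrow> th (th q p) (dl p q) = th q p"
  by (metis A(10,11,2,3,5,7))
lemma g2: "p\<in>P \<Longrightarrow> q\<in>P \<Longrightarrow> dl (dl p q) (th q p) = dl p q"
  by (metis (full_types) A(1,12,4,6,8,9))
lemma g3: "p\<in>P \<Longrightarrow> q\<in>P \<Longrightarrow> x\<in>P \<Longrightarrow> th q (th p x) = th (th q p) (th (dl p q) x)"
  by (smt (verit, del_insts) A(10,11,2,3,5,7))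
lemma g4: "p\<in>P \<Longrightarrow> q\<in>P \<Longrightarrow> x\<in>P \<Longrightarrow> dl p (dl q x) = dl (dl p q) (dl (th q p) x)"
  by (smt (verit, del_insts) A(1,12,8,9) g2)
lemma g5: "p\<in>P \<Longrightarrow> q\<in>P \<Longrightarrow> r\<in>P \<Longrightarrow> p = th r p \<Longrightarrow> r = dl r q \<Longrightarrow> q = th q r \<Longrightarrow> dl p q = p"
  by (metis A(12,6,9) dldl)
lemma g6: "p\<in>P \<Longrightarrow> q\<in>P \<Longrightarrow> s\<in>P \<Longrightarrow> p = dl p s \<Longrightarrow> s = th s p \<Longrightarrow> q = th s q \<Longrightarrow> th q p = q"
  by (metis A(11,5,9) thth)
end

theorem lemma4p12:
  fixes P :: "'a set" and th dl :: "'a \<Rightarrow> 'a \<Rightarrow> 'a" and p q :: 'a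
  assumes PA: "projection_algebra P th dl"
    and pP: "p \<in> P" and qP: "q \<in> P"
  defines "p' \<equiv> dl p q" and "q' \<equiv> th q p"
  shows "(pa_le th p' p \<and> pa_le th q' q \<and> pa_F th dl p' q') \<and>
         ((\<forall>x\<in>P. th q (th p x) = th q' (th p' x)) \<and>
          (\<forall>x\<in>P. dl p (dl q x) = dl p' (dl q' x))) \<and>
         (\<forall>r\<in>P. pa_le th p r \<and> pa_F th dl r q \<longrightarrow> p' = p) \<and>
         (\<forall>s\<in>P. pa_F th dl p s \<and> pa_le th q s \<longrightarrow> q' = q)"
proof -
  note A = ax[OF PA]
  have le1: "pa_le th p' p" unfolding pa_le_def p'_def using A(10) pP qP by metis
  have le2: "pa_le th q' q" unfolding pa_le_def q'_def using thth[OF PA] pP qP by metis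
  have F: "pa_F th dl p' q'" unfolding pa_F_def p'_def q'_def using g1[OF PA] g2[OF PA] pP qP by metis
  show ?thesis
    using le1 le2 F g3[OF PA pP qP] g4[OF PA pP qP] g5[OF PA pP qP] g6[OF PA pP qP]
    unfolding pa_le_def pa_F_def p'_def q'_def by blast
qed

end
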